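(* Let $n\ge2$ and $Q\in SU_n$ with eigenvalues $\mu_1,\dots,\mu_n$ (with multiplicity), and let $\zeta(Q):=\frac1{2\pi}\sum_{j=1}^n\arg(\mu_j)\in\mathbb{Z}$. Let $W_Q:=\{(k_1,\dots,k_n)\in\mathbb{Z}^n:\sum_{j=1}^nk_j=-\zeta(Q)\}$ and $Z_Q:=\{\underline{k}=(k_1,\dots,k_n)\in W_Q:\max_jk_j-\min_jk_j\le1\}$. If $\zeta(Q)\ge0$, then every $\underline{k}\in Z_Q$ has exactly $\zeta(Q)$ entries equal to $-1$ and all remaining entries equal to $0$. In particular, if $\zeta(Q)=0$, then $Z_Q=\{(0,\dots,0)\}$.
   Context: $SU_n$ is the special unitary group and $\arg(z)\in(-\pi,\pi]$ the principal argument. *)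

theory Defs
  imports "Jordan_Normal_Form.Schur_Decomposition"
begin

definition SU :: "nat \<Rightarrow> complex mat set" where
  "SU n = {Q. Q \<in> carrier_mat n n \<and> Q * mat_adjoint Q = 1\<^sub>m n
               \<and> mat_adjoint Q * Q = 1\<^sub>m n \<and> det Q = 1}"

definition eigenvalues_with_mult :: "complex mat \<Rightarrow> complex list \<Rightarrow> bool" where
  "eigenvalues_with_mult Q mus \<longleftrightarrow> char_poly Q = (\<Prod>\<mu>\<leftarrow>mus. [:- \<mu>, 1:])"

definition zeta :: "complex list \<Rightarrow> real" where
  "zeta mus = (\<Sum>\<mu>\<leftarrow>mus. Arg \<mu>) / (2 * pi)"

definition W_set :: "nat \<Rightarrow> real \<Rightarrow> int list set" where
  "W_set n z = {ks. length ks = n \<and> real_of_int (sum_list ks) = - z}"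

definition Z_set :: "nat \<Rightarrow> real \<Rightarrow> int list set" where
  "Z_set n z = {ks \<in> W_set n z. Max (set ks) - Min (set ks) \<le> 1}"

end

theory Submission
  imports Defs
begin

lemma deg_lin_prod:
  "degree (\<Prod>\<mu>\<leftarrow>mus. [:- (\<mu>::complex), 1:]) = length mus \<and> (\<Prod>\<mu>\<leftarrow>mus. [:- \<mu>, 1:]) \<noteq> 0"
proof (induction mus)
  case Nil then show ?case by simp
next
  case (Cons a mus)
  let ?p = "(\<Prod>\<mu>\<leftarrow>mus. [:- \<mu>, 1:])"
  have nz: "[:- a, 1:] \<noteq> 0" by simp
  have "(\<Prod>\<mu>\<leftarrow>a # mus. [:- \<mu>, 1:]) = [:- a, 1:] * ?p" by simp
  moreover have "degree ([:- a, 1:] * ?p) = Suc (length mus)"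
    using degree_mult_eq[OF nz] Cons.IH by simp
  moreover have "[:- a, 1:] * ?p \<noteq> 0" using nz Cons.IH by (metis mult_eq_0_iff)
  ultimately show ?case by simp
qed

lemma sum_m1_0: "(\<forall>k\<in>set ks. k = -1 \<or> k = (0::int)) \<Longrightarrow>
  sum_list ks = - int (length (filter (\<lambda>k. k = -1) ks))"
  by (induction ks) auto

lemma sum_le_m1: "(\<forall>k\<in>set ks. k \<le> (-1::int)) \<Longrightarrow> sum_list ks \<le> - int (length ks)"
  by (induction ks) auto

lemma sum_nonneg0: "(\<forall>k\<in>set ks. k \<ge> (0::int)) \<Longrightarrow> sum_list ks \<le> 0 \<Longrightarrow> (\<forall>k\<in>set ks. k = 0)"
proof (induction ks)
  case Nil then show ?case by simp
next
  case (Cons a ks)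
  have "sum_list ks \<ge> 0" using Cons.prems(1) by (intro sum_list_nonneg) auto
  then show ?case using Cons by auto
qed

lemma comb:
  fixes ks :: "int list" and z :: real
  assumes "length ks = n" "n > 0" "real_of_int (sum_list ks) = - z" "z \<ge> 0" "z < n"
    "Max (set ks) - Min (set ks) \<le> 1"
  shows "(\<forall>k\<in>set ks. k = -1 \<or> k = 0) \<and> real (length (filter (\<lambda>k. k = -1) ks)) = z"
proof -
  define m where "m = Min (set ks)"
  have ne: "set ks \<noteq> {}" using assms(1,2) by auto
  have b: "\<forall>k\<in>set ks. m \<le> k \<and> k \<le> m + 1"
  proof
    fix k assume k: "k \<in> set ks"
    have "Min (set ks) \<le> k" using k by (intro Min_le) auto
    moreover have "k \<le> Max (set ks)" using k by (intro Max_ge) auto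
    ultimately show "m \<le> k \<and> k \<le> m + 1" using assms(6) unfolding m_def by linarith
  qed
  have all: "\<forall>k\<in>set ks. k = -1 \<or> k = 0"
  proof (cases "m \<ge> 0")
    case True
    then have "\<forall>k\<in>set ks. k \<ge> 0" using b by auto
    moreover have "sum_list ks \<le> 0" using assms(3,4) by linarith
    ultimately show ?thesis using sum_nonneg0 by blast
  next
    case False
    show ?thesis
    proof (cases "m \<le> -2")
      case True
      then have "\<forall>k\<in>set ks. k \<le> -1" using b by auto
      then have "sum_list ks \<le> - int n" using sum_le_m1 assms(1) by blast
      then show ?thesis using assms(3,5) by linarith
    next
      case False2: False
      then have "m = -1" using False by auto
      then show ?thesis using b by auto
    qed
  qed
  show ?thesis using all sum_m1_0[OF all] assms(3) by simp
qed

theorem lemma2p7: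
  fixes n :: nat and Q :: "complex mat" and mus :: "complex list"
  assumes "n \<ge> 2"
    and "Q \<in> SU n"
    and "eigenvalues_with_mult Q mus"
    and "zeta mus \<ge> 0"
  shows "(\<forall>ks \<in> Z_set n (zeta mus).
            real (length (filter (\<lambda>k. k = -1) ks)) = zeta mus
          \<and> (\<forall>k \<in> set ks. k = -1 \<or> k = 0))
       \<and> (zeta mus = 0 \<longrightarrow> Z_set n (zeta mus) = {replicate n 0})"
proof -
  have Qc: "Q \<in> carrier_mat n n" using assms(2) unfolding SU_def by auto
  have "degree (char_poly Q) = n" using degree_monic_char_poly[OF Qc] by simp
  then have len: "length mus = n" using assms(3) deg_lin_prod[of mus]
    unfolding eigenvalues_with_mult_def by simp
  have "(\<Sum>\<mu>\<leftarrow>mus. Arg \<mu>) \<le> (\<Sum>\<mu>\<leftarrow>mus. pi)"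
    by (intro sum_list_mono) (simp add: Arg_bounded)
  also have "\<dots> = n * pi" using len by (simp add: sum_list_triv)
  finally have "zeta mus \<le> n / 2" unfolding zeta_def by (simp add: field_simps)
  then have zl: "zeta mus < n" using assms(1) by simp
  have P1: "\<forall>ks \<in> Z_set n (zeta mus).
            real (length (filter (\<lambda>k. k = -1) ks)) = zeta mus
          \<and> (\<forall>k \<in> set ks. k = -1 \<or> k = 0)"
  proof
    fix ks assume "ks \<in> Z_set n (zeta mus)"
    then have "length ks = n" "real_of_int (sum_list ks) = - zeta mus"
      "Max (set ks) - Min (set ks) \<le> 1" unfolding Z_set_def W_set_def by auto
    then show "real (length (filter (\<lambda>k. k = -1) ks)) = zeta mus
          \<and> (\<forall>k \<in> set ks. k = -1 \<or> k = 0)"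
      using comb[of ks n "zeta mus"] assms(1,4) zl by auto
  qed
  have P2: "Z_set n (zeta mus) = {replicate n 0}" if z0: "zeta mus = 0"
  proof
    show "Z_set n (zeta mus) \<subseteq> {replicate n 0}"
    proof
      fix ks assume ks: "ks \<in> Z_set n (zeta mus)"
      then have l: "length ks = n" unfolding Z_set_def W_set_def by auto
      from P1 ks z0 have "filter (\<lambda>k. k = -1) ks = []" "\<forall>k \<in> set ks. k = -1 \<or> k = 0"
        by auto
      then have "\<forall>k \<in> set ks. k = 0" by (auto simp: filter_empty_conv)
      then show "ks \<in> {replicate n 0}" using l replicate_length_same[of ks 0] by simp
    qed
  next
    have "set (replicate n (0::int)) = {0}" using assms(1) by simp
    then show "{replicate n 0} \<subseteq> Z_set n (zeta mus)"
      using z0 sum_list_replicate[of n "0::int"] unfolding Z_set_def W_set_def by simp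
  qed
  show ?thesis using P1 P2 by blast
qed

end
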